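(* Fix $\delta>0$. If $p=p(n)=\omega(n^{-1})$ and $G\sim G(n,p)$, then asymptotically almost surely, for every two disjoint vertex sets $X,Y\subseteq[n]$ with $|X|,|Y|\ge\delta n$, $G$ contains a matching of at least $\delta n/2$ edges each joining a vertex of $X$ to a vertex of $Y$.
   Context: $G(n,p)$ is the Erdős–Rényi random graph on $[n]$ with each edge present independently with probability $p$. "Asymptotically almost surely" means with probability tending to $1$ as $n\to\infty$. *)

theory Defs
  imports "HOL-Probability.Probability"
begin

definition all_edges :: "nat \<Rightarrow> nat set set" where
  "all_edges n = {e. e \<subseteq> {1..n} \<and> card e = 2}"

definition gnp :: "nat \<Rightarrow> real \<Rightarrow> nat set set pmf" where
  "gnp n p = map_pmf (\<lambda>f. {e \<in> all_edges n. f e})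
                     (Pi_pmf (all_edges n) False (\<lambda>_. bernoulli_pmf p))"

definition XY_matching :: "nat set set \<Rightarrow> nat set \<Rightarrow> nat set \<Rightarrow> nat set set \<Rightarrow> bool" where
  "XY_matching E X Y M \<longleftrightarrow>
     M \<subseteq> E \<and>
     (\<forall>e\<in>M. \<exists>x\<in>X. \<exists>y\<in>Y. e = {x, y}) \<and>
     (\<forall>e\<in>M. \<forall>e'\<in>M. e \<noteq> e' \<longrightarrow> e \<inter> e' = {})"

end

theory Submission
  imports Defs
begin

definition good :: "nat \<Rightarrow> nat \<Rightarrow> nat set set \<Rightarrow> bool" where
  "good n k E \<longleftrightarrow> (\<forall>A B. A \<subseteq> {1..n} \<and> B \<subseteq> {1..n} \<and> A \<inter> B = {} \<and> card A = k \<and> card B = k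
      \<longrightarrow> (\<exists>a\<in>A. \<exists>b\<in>B. {a,b} \<in> E))"

lemma no_edges_prob:
  assumes "finite I" "S \<subseteq> I" "0 \<le> q" "q \<le> 1"
  shows "measure_pmf.prob (Pi_pmf I False (\<lambda>_. bernoulli_pmf q)) {f. \<forall>e\<in>S. \<not> f e} = (1 - q) ^ card S"
proof -
  define B where "B = (\<lambda>x. if x \<in> S then {False} else (UNIV :: bool set))"
  have "{f. \<forall>e\<in>S. \<not> f e} = Pi I B"
    using assms(2) by (auto simp: B_def Pi_def)
  hence "measure_pmf.prob (Pi_pmf I False (\<lambda>_. bernoulli_pmf q)) {f. \<forall>e\<in>S. \<not> f e}
      = (\<Prod>x\<in>I. measure_pmf.prob (bernoulli_pmf q) (B x))"
    using measure_Pi_pmf_Pi[OF assms(1)] by simp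
  also have "\<dots> = (\<Prod>x\<in>I. if x \<in> S then 1 - q else 1)"
    by (intro prod.cong) (auto simp: B_def measure_pmf_single assms)
  also have "\<dots> = (1 - q) ^ card S"
    using assms(1,2) by (simp add: prod.If_cases Int_absorb1)
  finally show ?thesis .
qed

lemma card_edges_between:
  assumes "finite A" "finite B" "A \<inter> B = {}"
  shows "card {{a,b} | a b. a \<in> A \<and> b \<in> B} = card A * card B"
proof -
  have eq: "{{a,b} | a b. a \<in> A \<and> b \<in> B} = (\<lambda>(a,b). {a,b}) ` (A \<times> B)" by auto
  have "inj_on (\<lambda>(a,b). {a,b}) (A \<times> B)"
    using assms(3) by (auto simp: inj_on_def doubleton_eq_iff)
  thus ?thesis unfolding eq by (simp add: card_image card_cartesian_product)
qed

lemma XY_edge: "XY_matching E X Y M \<Longrightarrow> e \<in> M \<Longrightarrow> \<exists>x\<in>X. \<exists>y\<in>Y. e = {x,y}"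
  by (simp add: XY_matching_def)

lemma goodD: "good n k E \<Longrightarrow> A \<subseteq> {1..n} \<Longrightarrow> B \<subseteq> {1..n} \<Longrightarrow> A \<inter> B = {} \<Longrightarrow>
   card A = k \<Longrightarrow> card B = k \<Longrightarrow> \<exists>a\<in>A. \<exists>b\<in>B. {a,b} \<in> E"
  unfolding good_def by (erule allE[of _ A], erule allE[of _ B]) simp

lemma not_goodD: "\<not> good n k E \<Longrightarrow> \<exists>A B. A \<subseteq> {1..n} \<and> B \<subseteq> {1..n} \<and> A \<inter> B = {} \<and>
   card A = k \<and> card B = k \<and> (\<forall>a\<in>A. \<forall>b\<in>B. {a,b} \<notin> E)"
  unfolding good_def by simp

lemma det:
  assumes gd: "good n (nat \<lceil>\<delta> * real n / 2\<rceil>) E" and d: "\<delta> > 0"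
    and X: "X \<subseteq> {1..n}" and Y: "Y \<subseteq> {1..n}" and XY: "X \<inter> Y = {}"
    and cX: "real (card X) \<ge> \<delta> * real n" and cY: "real (card Y) \<ge> \<delta> * real n"
  shows "\<exists>M. XY_matching E X Y M \<and> real (card M) \<ge> \<delta> * real n / 2"
proof -
  define k where "k = nat \<lceil>\<delta> * real n / 2\<rceil>"
  have dn: "\<delta> * real n \<ge> 0" using d by simp
  have fX: "finite X" and fY: "finite Y" using X Y finite_subset by blast+
  have avail: "card (Z - \<Union>M) \<ge> k"
    if M: "XY_matching E X Y M" "finite M" "real (card M) < \<delta> * real n / 2"
      and Z: "Z = X \<or> Z = Y" for M Z
  proof -
    have fZ: "finite Z" using Z fX fY by blast
    have cZ: "real (card Z) \<ge> \<delta> * real n" using Z cX cY by auto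
    have single: "card (Z \<inter> e) \<le> 1" if "e \<in> M" for e
    proof -
      obtain x y where xy: "x \<in> X" "y \<in> Y" "e = {x,y}" using XY_edge[OF M(1) \<open>e \<in> M\<close>] by blast
      have "x \<noteq> y" using xy XY by blast
      have "Z \<inter> e \<subseteq> {x} \<or> Z \<inter> e \<subseteq> {y}" using Z xy XY by blast
      thus ?thesis using card_mono[of "{x}" "Z \<inter> e"] card_mono[of "{y}" "Z \<inter> e"] by auto
    qed
    have "Z \<inter> \<Union>M = (\<Union>e\<in>M. Z \<inter> e)" by blast
    hence "card (Z \<inter> \<Union>M) \<le> (\<Sum>e\<in>M. card (Z \<inter> e))" using card_UN_le[OF M(2), of "\<lambda>e. Z \<inter> e"] by simp
    also have "\<dots> \<le> (\<Sum>e\<in>M. 1)" using single by (intro sum_mono) auto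
    finally have c1: "card (Z \<inter> \<Union>M) \<le> card M" by simp
    have c2: "card (Z - \<Union>M) = card Z - card (Z \<inter> \<Union>M)"
      using fZ by (simp add: card_Diff_subset_Int)
    have "card (Z \<inter> \<Union>M) \<le> card Z" using fZ by (simp add: card_mono)
    hence "real (card (Z - \<Union>M)) = real (card Z) - real (card (Z \<inter> \<Union>M))"
      using c2 by simp
    also have "\<dots> > \<delta> * real n / 2" using c1 cZ M(3) by linarith
    finally have "\<delta> * real n / 2 < real (card (Z - \<Union>M))" .
    hence "\<lceil>\<delta> * real n / 2\<rceil> \<le> int (card (Z - \<Union>M))"
      by (simp add: ceiling_le_iff)
    thus ?thesis unfolding k_def by (subst nat_le_iff) assumption
  qed
  have finM: "finite M" if "XY_matching E X Y M" for M
  proof -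
    have "e \<subseteq> {1..n}" if em: "e \<in> M" for e
    proof -
      obtain x y where "x \<in> X" "y \<in> Y" "e = {x,y}" using XY_edge[OF \<open>XY_matching E X Y M\<close> em] by blast
      thus ?thesis using X Y by blast
    qed
    hence "M \<subseteq> Pow {1..n}" by blast
    thus ?thesis by (meson finite_Pow_iff finite_atLeastAtMost finite_subset)
  qed
  have step: "real j < \<delta> * real n / 2 + 1 \<Longrightarrow> \<exists>M. XY_matching E X Y M \<and> card M = j" for j
  proof (induction j)
    case 0
    show ?case by (rule exI[of _ "{}"]) (simp add: XY_matching_def)
  next
    case (Suc j)
    then obtain M where M: "XY_matching E X Y M" "card M = j" by force
    have fM: "finite M" using finM M(1) .
    have lt: "real (card M) < \<delta> * real n / 2" using Suc.prems M(2) by simp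
    have kX: "k \<le> card (X - \<Union>M)" by (rule avail[OF M(1) fM lt]) simp
    have kY: "k \<le> card (Y - \<Union>M)" by (rule avail[OF M(1) fM lt]) simp
    obtain A where A: "A \<subseteq> X - \<Union>M" "card A = k" using obtain_subset_with_card_n[OF kX] by metis
    obtain B where B: "B \<subseteq> Y - \<Union>M" "card B = k" using obtain_subset_with_card_n[OF kY] by metis
    have "A \<subseteq> {1..n}" "B \<subseteq> {1..n}" "A \<inter> B = {}" using A B X Y XY by auto
    from goodD[OF gd[folded k_def] this A(2) B(2)]
    obtain a b where ab: "a \<in> A" "b \<in> B" "{a,b} \<in> E" by blast
    define M' where "M' = insert {a,b} M"
    have notin: "{a,b} \<notin> M" using ab(1) A(1) by blast
    have m1: "M \<subseteq> E" and m3: "\<forall>e\<in>M. \<forall>e'\<in>M. e \<noteq> e' \<longrightarrow> e \<inter> e' = {}"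
      using M(1) unfolding XY_matching_def by auto
    have aM: "a \<notin> \<Union>M" "b \<notin> \<Union>M" using ab(1,2) A(1) B(1) by blast+
    have "XY_matching E X Y M'"
      unfolding XY_matching_def M'_def
    proof (intro conjI)
      show "insert {a, b} M \<subseteq> E" using m1 ab by simp
      have aX: "a \<in> X" and bY: "b \<in> Y" using ab(1,2) A(1) B(1) by blast+
      show "\<forall>e\<in>insert {a, b} M. \<exists>x\<in>X. \<exists>y\<in>Y. e = {x, y}"
      proof
        fix e assume "e \<in> insert {a, b} M"
        then consider "e = {a,b}" | "e \<in> M" by blast
        thus "\<exists>x\<in>X. \<exists>y\<in>Y. e = {x, y}"
        proof cases
          case 1 thus ?thesis using aX bY by blast
        next
          case 2 thus ?thesis using XY_edge[OF M(1)] by blast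
        qed
      qed
      have dis: "{a,b} \<inter> e = {}" "e \<inter> {a,b} = {}" if "e \<in> M" for e
        using aM that by auto
      show "\<forall>e\<in>insert {a, b} M. \<forall>e'\<in>insert {a, b} M. e \<noteq> e' \<longrightarrow> e \<inter> e' = {}"
        using m3 dis by (simp add: insert_iff)
    qed
    moreover have "card M' = Suc j" using notin fM M(2) by (simp add: M'_def)
    ultimately show ?case by blast
  qed
  have "\<lceil>\<delta> * real n / 2\<rceil> \<ge> 0" using dn by simp
  hence kk: "real k = real_of_int \<lceil>\<delta> * real n / 2\<rceil>" unfolding k_def by simp
  have cc: "real_of_int \<lceil>\<delta> * real n / 2\<rceil> - 1 < \<delta> * real n / 2"
    "\<delta> * real n / 2 \<le> real_of_int \<lceil>\<delta> * real n / 2\<rceil>"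
    using ceiling_correct by blast+
  have "real k < \<delta> * real n / 2 + 1" using kk cc by linarith
  then obtain M where M: "XY_matching E X Y M" "card M = k" using step by blast
  have "real k \<ge> \<delta> * real n / 2" using kk cc by linarith
  thus ?thesis using M by auto
qed

lemma finite_all_edges: "finite (all_edges n)"
proof -
  have "all_edges n \<subseteq> Pow {1..n}" unfolding all_edges_def by blast
  thus ?thesis by (meson finite_Pow_iff finite_atLeastAtMost finite_subset)
qed

lemma bad_bound:
  assumes q: "0 \<le> q" "q \<le> 1"
  shows "measure_pmf.prob (gnp n q) {E. \<not> good n k E} \<le> 4 ^ n * (1 - q) ^ (k * k)"
proof -
  define I where "I = all_edges n"
  define Q where "Q = Pi_pmf I False (\<lambda>_. bernoulli_pmf q)"
  define P where "P = {(A,B). A \<subseteq> {1..n} \<and> B \<subseteq> {1..n} \<and> A \<inter> B = {} \<and> card A = k \<and> card B = k}"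
  define S where "S = (\<lambda>(A::nat set,B::nat set). {{a,b} | a b. a \<in> A \<and> b \<in> B})"
  define F where "F = (\<lambda>AB. {f. \<forall>e\<in>S AB. \<not> f e})"
  have fI: "finite I" unfolding I_def by (rule finite_all_edges)
  have PP: "P \<subseteq> Pow {1..n} \<times> Pow {1..n}" unfolding P_def by blast
  have fP: "finite P" using PP finite_subset by blast
  have cP: "card P \<le> 4 ^ n"
  proof -
    have "card P \<le> card (Pow {1..n} \<times> Pow {1..(n::nat)})" using PP by (intro card_mono) auto
    also have "\<dots> = 2 ^ n * 2 ^ n" by (simp add: card_cartesian_product card_Pow)
    also have "\<dots> = 4 ^ n" by (simp add: power_mult_distrib[symmetric])
    finally show ?thesis .
  qed
  have incl: "(\<lambda>f. {e \<in> I. f e}) -` {E. \<not> good n k E} \<subseteq> (\<Union>AB\<in>P. F AB)"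
  proof
    fix f assume "f \<in> (\<lambda>f. {e \<in> I. f e}) -` {E. \<not> good n k E}"
    hence "\<not> good n k {e \<in> I. f e}" by simp
    then obtain A B where AB: "A \<subseteq> {1..n}" "B \<subseteq> {1..n}" "A \<inter> B = {}" "card A = k" "card B = k"
      and no: "\<forall>a\<in>A. \<forall>b\<in>B. {a,b} \<notin> {e \<in> I. f e}"
      using not_goodD[of n k "{e \<in> I. f e}"] by metis
    have "f \<in> F (A,B)" unfolding F_def S_def
    proof (clarsimp)
      fix a b assume ab: "a \<in> A" "b \<in> B" "f {a,b}"
      have "a \<noteq> b" using ab AB(3) by blast
      hence "{a,b} \<in> I" using ab AB(1,2) unfolding I_def all_edges_def by auto
      thus False using no ab by blast
    qed
    moreover have "(A,B) \<in> P" unfolding P_def using AB by simp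
    ultimately show "f \<in> (\<Union>AB\<in>P. F AB)" by blast
  qed
  have each: "measure_pmf.prob Q (F AB) = (1 - q) ^ (k * k)" if "AB \<in> P" for AB
  proof -
    obtain A B where AB: "AB = (A,B)" "A \<subseteq> {1..n}" "B \<subseteq> {1..n}" "A \<inter> B = {}" "card A = k" "card B = k"
      using \<open>AB \<in> P\<close> unfolding P_def by blast
    have fA: "finite A" "finite B" using AB finite_subset by blast+
    have SI: "S AB \<subseteq> I"
    proof
      fix e assume "e \<in> S AB"
      then obtain a b where ab: "a \<in> A" "b \<in> B" "e = {a,b}" unfolding S_def AB(1) by blast
      have "a \<noteq> b" using ab AB(4) by blast
      thus "e \<in> I" using ab AB(2,3) unfolding I_def all_edges_def by auto
    qed
    have cS: "card (S AB) = k * k" unfolding AB(1) S_def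
      using card_edges_between[OF fA AB(4)] AB(5,6) by simp
    show ?thesis unfolding Q_def F_def using no_edges_prob[OF fI SI q] cS by simp
  qed
  have "measure_pmf.prob (gnp n q) {E. \<not> good n k E}
      = measure_pmf.prob Q ((\<lambda>f. {e \<in> I. f e}) -` {E. \<not> good n k E})"
    unfolding gnp_def Q_def I_def by simp
  also have "\<dots> \<le> measure_pmf.prob Q (\<Union>AB\<in>P. F AB)"
    using incl by (intro measure_pmf.finite_measure_mono) auto
  also have "\<dots> \<le> (\<Sum>AB\<in>P. measure_pmf.prob Q (F AB))"
    using fP by (intro measure_pmf.finite_measure_subadditive_finite) auto
  also have "\<dots> = real (card P) * (1 - q) ^ (k * k)" using each by simp
  also have "\<dots> \<le> 4 ^ n * (1 - q) ^ (k * k)"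
  proof (rule mult_right_mono)
    show "real (card P) \<le> 4 ^ n" using cP by (metis of_nat_le_iff of_nat_numeral of_nat_power)
    show "0 \<le> (1 - q) ^ (k * k)" using q by simp
  qed
  finally show ?thesis .
qed

lemma tail_bound:
  assumes q: "0 \<le> q" "q \<le> 1" and d: "\<delta> > 0" and n: "n \<ge> 1"
    and C: "4 * (ln 4 + 1) / \<delta>^2 \<le> q * real n"
  shows "4 ^ n * (1 - q) ^ (nat \<lceil>\<delta> * real n / 2\<rceil> * nat \<lceil>\<delta> * real n / 2\<rceil>) \<le> exp (- real n)"
proof -
  define k where "k = nat \<lceil>\<delta> * real n / 2\<rceil>"
  have dn: "\<delta> * real n / 2 \<ge> 0" using d by simp
  have "\<lceil>\<delta> * real n / 2\<rceil> \<ge> 0" using dn by simp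
  hence kk: "real k = real_of_int \<lceil>\<delta> * real n / 2\<rceil>" unfolding k_def by simp
  have kge: "real k \<ge> \<delta> * real n / 2" unfolding kk by (rule le_of_int_ceiling)
  have "(1 - q) ^ (k * k) \<le> exp (- q) ^ (k * k)"
    using q by (intro power_mono) (auto simp: add.commute[of 1] exp_ge_add_one_self[of "-q", simplified])
  also have "\<dots> = exp (- q * real (k * k))"
    by (metis exp_of_nat_mult mult.commute)
  finally have h1: "(1 - q) ^ (k * k) \<le> exp (- q * real (k * k))" .
  have a: "q * (\<delta> * real n / 2) ^ 2 \<le> q * real k ^ 2"
    using q dn kge by (intro mult_left_mono power_mono) auto
  have b: "q * (\<delta> * real n / 2) ^ 2 = (q * real n) * real n * \<delta>^2 / 4"
    by (simp add: power2_eq_square field_simps)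
  have c: "(q * real n) * real n * \<delta>^2 / 4 \<ge> (4 * (ln 4 + 1) / \<delta>^2) * real n * \<delta>^2 / 4"
    using C by (intro divide_right_mono mult_right_mono) auto
  have e: "(4 * (ln 4 + 1) / \<delta>^2) * real n * \<delta>^2 / 4 = real n * (ln 4 + 1)"
    using d by (simp add: field_simps)
  have f: "real (k * k) = real k ^ 2" by (simp add: power2_eq_square)
  have h2: "q * real (k * k) \<ge> real n * (ln 4 + 1)"
    unfolding f using a b c e by linarith
  have h4: "(4::real) ^ n = exp (real n * ln 4)"
    by (simp add: exp_of_nat_mult)
  have "4 ^ n * (1 - q) ^ (k * k) \<le> exp (real n * ln 4) * exp (- q * real (k * k))"
    unfolding h4[symmetric] using h1 by (intro mult_left_mono) auto
  also have "\<dots> = exp (real n * ln 4 - q * real (k * k))" by (simp add: exp_add[symmetric])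
  also have "\<dots> \<le> exp (- real n)" using h2 by (simp add: algebra_simps)
  finally show ?thesis unfolding k_def .
qed

lemma exp_neg_nat_lim: "(\<lambda>n. 1 - exp (- real n)) \<longlonglongrightarrow> 1"
proof -
  have "filterlim (\<lambda>n. - real n) at_bot sequentially"
    using filterlim_real_sequentially filterlim_uminus_at_top by blast
  hence "(\<lambda>n. exp (- real n)) \<longlonglongrightarrow> 0"
    using filterlim_compose[OF exp_at_bot] by blast
  hence "(\<lambda>n. 1 - exp (- real n)) \<longlonglongrightarrow> 1 - 0" by (intro tendsto_diff) auto
  thus ?thesis by simp
qed

theorem claim2p8:
  fixes \<delta> :: real and p :: "nat \<Rightarrow> real"
  assumes "\<delta> > 0"
    and "\<And>n. 0 \<le> p n \<and> p n \<le> 1"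
    and "filterlim (\<lambda>n. p n / (1 / real n)) at_top sequentially"
  shows "(\<lambda>n. measure_pmf.prob (gnp n (p n))
            {E. \<forall>X Y. X \<subseteq> {1..n} \<and> Y \<subseteq> {1..n} \<and> X \<inter> Y = {} \<and>
                   real (card X) \<ge> \<delta> * real n \<and> real (card Y) \<ge> \<delta> * real n \<longrightarrow>
                   (\<exists>M. XY_matching E X Y M \<and> real (card M) \<ge> \<delta> * real n / 2)})
         \<longlonglongrightarrow> 1"
  (is "(\<lambda>n. measure_pmf.prob (gnp n (p n)) (?Ev n)) \<longlonglongrightarrow> 1")
proof (rule tendsto_sandwich[OF _ _ exp_neg_nat_lim tendsto_const])
  show "\<forall>\<^sub>F n in sequentially. measure_pmf.prob (gnp n (p n)) (?Ev n) \<le> 1"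
    by (simp add: measure_pmf.prob_le_1)
  define C where "C = 4 * (ln 4 + 1) / \<delta>^2"
  have ev1: "\<forall>\<^sub>F n in sequentially. C \<le> p n / (1 / real n)"
    using assms(3) unfolding filterlim_at_top by blast
  have ev2: "\<forall>\<^sub>F n in sequentially. (1::nat) \<le> n" by (rule eventually_ge_at_top)
  show "\<forall>\<^sub>F n in sequentially. 1 - exp (- real n) \<le> measure_pmf.prob (gnp n (p n)) (?Ev n)"
    using ev1 ev2
  proof eventually_elim
    case (elim n)
    define k where "k = nat \<lceil>\<delta> * real n / 2\<rceil>"
    have q: "0 \<le> p n" "p n \<le> 1" using assms(2) by auto
    have Cq: "C \<le> p n * real n" using elim by simp
    have sub: "{E. good n k E} \<subseteq> ?Ev n"
      using det[OF _ assms(1)] unfolding k_def by blast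
    have "measure_pmf.prob (gnp n (p n)) {E. good n k E}
        = 1 - measure_pmf.prob (gnp n (p n)) {E. \<not> good n k E}"
    proof -
      have "UNIV - {E. \<not> good n k E} = {E. good n k E}" by blast
      thus ?thesis using measure_pmf.prob_compl[of "{E. \<not> good n k E}" "gnp n (p n)"] by simp
    qed
    also have "\<dots> \<ge> 1 - 4 ^ n * (1 - p n) ^ (k * k)"
      using bad_bound[OF q, of n k] by simp
    also have "4 ^ n * (1 - p n) ^ (k * k) \<le> exp (- real n)"
      unfolding k_def using tail_bound[OF q assms(1) elim(2)] Cq unfolding C_def by blast
    hence "1 - exp (- real n) \<le> 1 - 4 ^ n * (1 - p n) ^ (k * k)" by simp
    finally have "1 - exp (- real n) \<le> measure_pmf.prob (gnp n (p n)) {E. good n k E}" .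
    also have "\<dots> \<le> measure_pmf.prob (gnp n (p n)) (?Ev n)"
      using sub by (intro measure_pmf.finite_measure_mono) auto
    finally show ?case .
  qed
qed

end
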